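(* If $\mathcal R$ is a polyhedral region in $\mathbb Z^k$, then either $\mathcal R$ contains arbitrarily large $k$-dimensional boxes (i.e. for every $n$ it contains a $k$-dimensional box of size $n$), or $\mathcal R$ is a set of measure zero.
   Context: A half-space is $\{\vec z\in\mathbb Z^k:\vec v\cdot\vec z>n\}$ with $\vec v\in\mathbb Z^k$, $n\in\mathbb Z$; a polyhedral region is $\mathbb Z^k$ or an intersection of finitely many half-spaces. A hyperplane is $\{\vec z\in\mathbb Z^k:\vec v\cdot\vec z=n\}$ with $\vec v\in\mathbb Z^k\setminus\{0\}$, $n\in\mathbb Z$; a set of measure zero is a subset of $\mathbb Z^k$ covered by finitely many hyperplanes. A $k$-dimensional box of size $n$ is $\{\vec z\in\mathbb Z^k: c_i\le z_i\le c_i+n,\ i=1,\dots,k\}$ for some $c_i\in\mathbb Z$. *)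

theory Defs
  imports Main
begin

text \<open>Integer vectors in Z^k are represented as functions nat => int that vanish
  at indices >= k (explicit carrier, since k varies).\<close>

definition Zk :: "nat \<Rightarrow> (nat \<Rightarrow> int) set" where
  "Zk k = {z. \<forall>i\<ge>k. z i = 0}"

definition dotk :: "nat \<Rightarrow> (nat \<Rightarrow> int) \<Rightarrow> (nat \<Rightarrow> int) \<Rightarrow> int" where
  "dotk k v z = (\<Sum>i<k. v i * z i)"

definition halfspace :: "nat \<Rightarrow> (nat \<Rightarrow> int) \<Rightarrow> int \<Rightarrow> (nat \<Rightarrow> int) set" where
  "halfspace k v n = {z \<in> Zk k. dotk k v z > n}"

definition hyperplane :: "nat \<Rightarrow> (nat \<Rightarrow> int) \<Rightarrow> int \<Rightarrow> (nat \<Rightarrow> int) set" where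
  "hyperplane k v n = {z \<in> Zk k. dotk k v z = n}"

definition polyhedral_region :: "nat \<Rightarrow> (nat \<Rightarrow> int) set \<Rightarrow> bool" where
  "polyhedral_region k R \<longleftrightarrow>
     R = Zk k \<or>
     (\<exists>hs :: ((nat \<Rightarrow> int) \<times> int) list. hs \<noteq> [] \<and> (\<forall>(v, n) \<in> set hs. v \<in> Zk k) \<and>
        R = (\<Inter>(v, n) \<in> set hs. halfspace k v n))"

definition measure_zero :: "nat \<Rightarrow> (nat \<Rightarrow> int) set \<Rightarrow> bool" where
  "measure_zero k S \<longleftrightarrow> S \<subseteq> Zk k \<and>
     (\<exists>hs :: ((nat \<Rightarrow> int) \<times> int) list. (\<forall>(v, n) \<in> set hs. v \<in> Zk k \<and> v \<noteq> (\<lambda>_. 0)) \<and>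
        S \<subseteq> (\<Union>(v, n) \<in> set hs. hyperplane k v n))"

definition box :: "nat \<Rightarrow> (nat \<Rightarrow> int) \<Rightarrow> int \<Rightarrow> (nat \<Rightarrow> int) set" where
  "box k c n = {z \<in> Zk k. \<forall>i<k. c i \<le> z i \<and> z i \<le> c i + n}"

end

theory Submission imports Defs begin

lemma dotk_comm: "dotk k u v = dotk k v u" by (simp add: dotk_def mult.commute)
lemma dotk_lin2: "dotk k u (\<lambda>i. a * x i + b * y i) = a * dotk k u x + b * dotk k u y"
  by (simp add: dotk_def sum.distrib sum_distrib_left algebra_simps)
lemma dotk_lin2': "dotk k u (\<lambda>i. a * x i + y i) = a * dotk k u x + dotk k u y"
  by (simp add: dotk_def sum.distrib sum_distrib_left algebra_simps)
lemma dotk_lin2m: "dotk k u (\<lambda>i. a * x i - b * y i) = a * dotk k u x - b * dotk k u y"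
  by (simp add: dotk_def sum_subtractf sum_distrib_left algebra_simps)
lemma dotk_lin1m: "dotk k (\<lambda>i. a * x i - b * y i) u = a * dotk k x u - b * dotk k y u"
  by (simp add: dotk_def sum_subtractf sum_distrib_left algebra_simps)
lemma dotk_sum1: "dotk k (\<lambda>i. \<Sum>j<m. l j * w j i) z = (\<Sum>j<m. l j * dotk k (w j) z)"
  unfolding dotk_def by (simp add: sum_distrib_left sum_distrib_right algebra_simps) (rule sum.swap)
lemma dotk_scale1: "dotk k (\<lambda>i. a * x i) u = a * dotk k x u"
  by (simp add: dotk_def sum_distrib_left algebra_simps)
lemma dotk_self_ge0: "dotk k v v \<ge> 0"
  by (simp add: dotk_def sum_nonneg)
lemma dotk_self_zero: "dotk k v v = 0 \<Longrightarrow> i<k \<Longrightarrow> v i = 0"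
  unfolding dotk_def by (subst (asm) sum_nonneg_eq_0_iff) auto
lemma dotk_zero1: "\<forall>i<k. v i = 0 \<Longrightarrow> dotk k v z = 0"
  by (simp add: dotk_def)
lemma dotk_cong2: "\<forall>i<k. x i = y i \<Longrightarrow> dotk k v x = dotk k v y"
  by (simp add: dotk_def)
lemma dotk_cong1: "\<forall>i<k. x i = y i \<Longrightarrow> dotk k x v = dotk k y v"
  by (simp add: dotk_def)
lemma box_dot_bound:
  assumes "z \<in> box k c n" "n \<ge> 0"
  shows "dotk k v z \<ge> dotk k v c - n * (\<Sum>i<k. \<bar>v i\<bar>)"
proof -
  have "dotk k v z - dotk k v c = (\<Sum>i<k. v i * (z i - c i))"
    by (simp add: dotk_def sum_subtractf algebra_simps)
  also have "\<dots> \<ge> (\<Sum>i<k. - (n * \<bar>v i\<bar>))"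
  proof (rule sum_mono)
    fix i assume "i \<in> {..<k}"
    hence "0 \<le> z i - c i" "z i - c i \<le> n" using assms unfolding box_def by auto
    hence "\<bar>v i * (z i - c i)\<bar> \<le> \<bar>v i\<bar> * n"
      by (simp add: abs_mult mult_left_mono)
    thus "- (n * \<bar>v i\<bar>) \<le> v i * (z i - c i)" by (simp add: abs_le_iff mult.commute)
  qed
  finally show ?thesis by (simp add: sum_negf sum_distrib_left)
qed


definition gA :: "nat \<Rightarrow> (nat \<Rightarrow> int) list \<Rightarrow> bool" where
  "gA k vs = (\<exists>d. \<forall>j<length vs. dotk k (vs!j) d > 0)"
definition gB :: "nat \<Rightarrow> (nat \<Rightarrow> int) list \<Rightarrow> bool" where
  "gB k vs = (\<exists>l. (\<forall>j<length vs. l j \<ge> (0::int)) \<and> (\<exists>j<length vs. l j > 0) \<and>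
      (\<forall>i<k. (\<Sum>j<length vs. l j * (vs!j) i) = 0))"

lemma gordan: "gA k vs \<or> gB k vs"
proof (induction "length vs" arbitrary: vs)
  case 0 then show ?case by (simp add: gA_def)
next
  case (Suc m)
  then obtain v us where vs: "vs = v # us" and lus: "length us = m" by (cases vs) auto
  define a where "a = dotk k v v"
  show ?case
  proof (cases "a = 0")
    case True
    hence vz: "\<forall>i<k. v i = 0" using dotk_self_zero a_def by metis
    have "gB k vs" unfolding gB_def
      apply (rule exI[of _ "\<lambda>j. if j = 0 then 1 else 0"])
      using vz by (simp add: vs sum.lessThan_Suc_shift del: sum.lessThan_Suc)
    then show ?thesis ..
  next
    case False
    have apos: "a > 0" using False dotk_self_ge0[of k v] a_def by simp
    from Suc(1)[of us] lus have "gA k us \<or> gB k us" by simp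
    then show ?thesis
    proof
      assume "gB k us"
      then obtain l' where l': "\<forall>j<m. l' j \<ge> 0" "\<exists>j<m. l' j > 0"
        "\<forall>i<k. (\<Sum>j<m. l' j * (us!j) i) = 0" unfolding gB_def lus by blast
      have "gB k vs" unfolding gB_def
        apply (rule exI[of _ "\<lambda>j. if j = 0 then 0 else l' (j - 1)"])
        using l' apply (simp add: vs lus sum.lessThan_Suc_shift del: sum.lessThan_Suc)
        proof -
          from l'(2) obtain j0 where "j0 < m" "0 < l' j0" by blast
          thus "\<exists>j>0. 0 < j \<longrightarrow> j < Suc m \<and> 0 < l' (j - Suc 0)"
            by (intro exI[of _ "Suc j0"]) simp
        qed
      then show ?thesis ..
    next
      assume "gA k us"
      then obtain d' where d': "\<forall>j<m. dotk k (us!j) d' > 0" unfolding gA_def lus by blast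
      show ?thesis
      proof (cases "dotk k v d' > 0")
        case True
        have "gA k vs" unfolding gA_def
          apply (rule exI[of _ d'])
          using True d' by (auto simp: vs lus less_Suc_eq_0_disj)
        then show ?thesis ..
      next
        case False
        define ws where "ws = map (\<lambda>u i. a * u i - dotk k u v * v i) us"
        have lws: "length ws = m" using lus ws_def by simp
        have wsj: "ws!j = (\<lambda>i. a * (us!j) i - dotk k (us!j) v * v i)" if "j<m" for j
          using that lus ws_def by simp
        from Suc(1)[of ws] lws have "gA k ws \<or> gB k ws" by simp
        then show ?thesis
        proof
          assume "gA k ws"
          then obtain e where e: "\<forall>j<m. dotk k (ws!j) e > 0" unfolding gA_def lws by blast
          define e2 where "e2 = (\<lambda>i. a * e i - dotk k v e * v i)"
          define M where "M = 1 + (\<Sum>j<m. \<bar>dotk k (us!j) v\<bar>)"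
          define d where "d = (\<lambda>i. M * e2 i + v i)"
          have ve2: "dotk k v e2 = 0" unfolding e2_def dotk_lin2m a_def by simp
          have "gA k vs" unfolding gA_def
          proof (rule exI[of _ d], intro allI impI)
            fix j assume j: "j < length vs"
            show "dotk k (vs!j) d > 0"
            proof (cases j)
              case 0
              then show ?thesis using apos by (simp add: vs d_def dotk_lin2' ve2 a_def)
            next
              case (Suc j')
              have j': "j' < m" using j Suc vs lus by simp
              let ?u = "us!j'"
              have q1: "dotk k ?u e2 = a * dotk k ?u e - dotk k v e * dotk k ?u v"
                unfolding e2_def by (rule dotk_lin2m)
              have q2: "dotk k (ws!j') e = a * dotk k ?u e - dotk k ?u v * dotk k v e"
                unfolding wsj[OF j'] by (rule dotk_lin1m)
              have "dotk k ?u e2 = dotk k (ws!j') e" using q1 q2 by simp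
              hence ge1: "dotk k ?u e2 \<ge> 1" using e j' by (metis int_one_le_iff_zero_less)
              have "\<bar>dotk k ?u v\<bar> \<le> (\<Sum>j<m. \<bar>dotk k (us!j) v\<bar>)"
                using j' by (intro member_le_sum) auto
              hence "\<bar>dotk k ?u v\<bar> < M" unfolding M_def by simp
              moreover have "M \<le> M * dotk k ?u e2"
              proof -
                have "M \<ge> 0" unfolding M_def by (simp add: sum_nonneg add_nonneg_nonneg)
                hence "M * 1 \<le> M * dotk k ?u e2" using mult_left_mono[OF ge1] by simp
                thus ?thesis by simp
              qed
              ultimately have "M * dotk k ?u e2 + dotk k ?u v > 0" by linarith
              then show ?thesis using Suc by (simp add: vs d_def dotk_lin2')
            qed
          qed
          then show ?thesis ..
        next
          assume "gB k ws"
          then obtain mu where mu: "\<forall>j<m. mu j \<ge> 0" "\<exists>j<m. mu j > 0"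
            "\<forall>i<k. (\<Sum>j<m. mu j * (ws!j) i) = 0" unfolding gB_def lws by blast
          define C where "C = (\<Sum>j<m. mu j * dotk k (us!j) v)"
          have H: "a * (\<Sum>j<m. mu j * (us!j) i) = C * v i" if "i<k" for i
          proof -
            have "0 = (\<Sum>j<m. mu j * (ws!j) i)" using mu(3) that by simp
            also have "\<dots> = (\<Sum>j<m. a * (mu j * (us!j) i) - (mu j * dotk k (us!j) v) * v i)"
              by (rule sum.cong) (auto simp: wsj algebra_simps)
            also have "\<dots> = a * (\<Sum>j<m. mu j * (us!j) i) - C * v i"
              by (simp add: sum_subtractf sum_distrib_left sum_distrib_right C_def)
            finally show ?thesis by simp
          qed
          show ?thesis
          proof (cases "C \<le> 0")
            case True
            obtain j0 where j0: "j0 < m" "mu j0 > 0" using mu(2) by blast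
            have "gB k vs" unfolding gB_def
            proof (rule exI[of _ "\<lambda>j. if j = 0 then - C else a * mu (j - 1)"], intro conjI allI impI)
              fix j assume "j < length vs"
              show "0 \<le> (if j = 0 then - C else a * mu (j - 1))"
                using True apos mu(1) \<open>j < length vs\<close> vs lus by auto
            next
              show "\<exists>j<length vs. 0 < (if j = 0 then - C else a * mu (j - 1))"
                using j0 apos vs lus by (intro exI[of _ "Suc j0"]) auto
            next
              fix i assume i: "i < k"
              have "(\<Sum>j<length vs. (if j = 0 then - C else a * mu (j - 1)) * (vs ! j) i)
                  = - C * v i + (\<Sum>j<m. a * mu j * (us!j) i)"
                by (simp add: vs lus sum.lessThan_Suc_shift del: sum.lessThan_Suc)
              also have "\<dots> = - C * v i + a * (\<Sum>j<m. mu j * (us!j) i)"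
                by (simp add: sum_distrib_left mult.assoc)
              also have "\<dots> = 0" using H[OF i] by simp
              finally show "(\<Sum>j<length vs. (if j = 0 then - C else a * mu (j - 1)) * (vs ! j) i) = 0" .
            qed
            then show ?thesis ..
          next
            case Cpos: False
            obtain j0 where j0: "j0 < m" "mu j0 > 0" using mu(2) by blast
            define S where "S = dotk k (\<lambda>i. \<Sum>j<m. mu j * (us!j) i) d'"
            have "S = (\<Sum>j<m. mu j * dotk k (us!j) d')" unfolding S_def by (rule dotk_sum1)
            also have "\<dots> \<ge> mu j0 * dotk k (us!j0) d'"
              using j0 mu(1) d' by (intro member_le_sum) auto
            finally have "S > 0" using j0 d' by (smt (verit) mult_pos_pos)
            hence "a * S > 0" using apos by simp
            moreover have "a * S = dotk k (\<lambda>i. C * v i) d'"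
              unfolding S_def dotk_scale1[symmetric] by (rule dotk_cong1) (simp add: H)
            moreover have "dotk k (\<lambda>i. C * v i) d' \<le> 0"
              using False Cpos by (simp add: dotk_scale1 mult_nonneg_nonpos)
            ultimately show ?thesis by simp
          qed
        qed
      qed
    qed
  qed
qed


theorem lemmaB21:
  fixes k :: nat and R :: "(nat \<Rightarrow> int) set"
  assumes "polyhedral_region k R"
  shows "(\<forall>n::nat. \<exists>c \<in> Zk k. box k c (int n) \<subseteq> R) \<or> measure_zero k R"
proof -
  consider (all) "R = Zk k" | (hs) hs where "hs \<noteq> []" "\<forall>(v, n) \<in> set hs. v \<in> Zk k"
      "R = (\<Inter>(v, n) \<in> set hs. halfspace k v n)"
    using assms unfolding polyhedral_region_def by blast
  then show ?thesis
  proof cases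
    case all
    have "box k (\<lambda>_. 0) (int n) \<subseteq> R" for n unfolding all box_def by auto
    moreover have "(\<lambda>_. 0) \<in> Zk k" by (simp add: Zk_def)
    ultimately show ?thesis by blast
  next
    case hs
    have Rsub: "R \<subseteq> Zk k"
    proof
      fix z assume "z \<in> R"
      obtain v n where "(v, n) \<in> set hs" using hs(1) by (metis list.set_sel(1) surj_pair)
      thus "z \<in> Zk k" using \<open>z \<in> R\<close> hs(3) by (auto simp: halfspace_def)
    qed
    have memR: "z \<in> R \<Longrightarrow> (v, n) \<in> set hs \<Longrightarrow> z \<in> Zk k \<and> dotk k v z > n" for z v n
      using hs(3) by (auto simp: halfspace_def)
    show ?thesis
    proof (cases "\<exists>(v, n) \<in> set hs. (\<forall>i<k. v i = 0) \<and> n \<ge> 0")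
      case True
      then obtain v n where vn: "(v, n) \<in> set hs" "\<forall>i<k. v i = 0" "n \<ge> 0" by blast
      have "R = {}"
      proof (rule ccontr)
        assume "R \<noteq> {}" then obtain z where "z \<in> R" by blast
        from memR[OF this vn(1)] dotk_zero1[OF vn(2)] vn(3) show False by simp
      qed
      hence "measure_zero k R" unfolding measure_zero_def
        by (intro conjI exI[of _ "[]"]) auto
      then show ?thesis ..
    next
      case False
      hence triv: "(v, n) \<in> set hs \<Longrightarrow> \<forall>i<k. v i = 0 \<Longrightarrow> n < 0" for v n by fastforce
      define hs' where "hs' = filter (\<lambda>(v, n). \<exists>i<k. v i \<noteq> 0) hs"
      define vs where "vs = map fst hs'"
      have lvs: "length vs = length hs'" by (simp add: vs_def)
      have inhs: "hs'!j \<in> set hs" "\<exists>i<k. fst (hs'!j) i \<noteq> 0" if "j < length hs'" for j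
        using nth_mem[OF that] unfolding hs'_def by auto
      from gordan[of k vs] show ?thesis
      proof
        assume "gA k vs"
        then obtain d where d: "\<forall>j<length vs. dotk k (vs!j) d > 0" unfolding gA_def by blast
        define d0 where "d0 = (\<lambda>i. if i < k then d i else 0)"
        have dd0: "dotk k u d0 = dotk k u d" for u by (rule dotk_cong2) (simp add: d0_def)
        have "\<exists>c \<in> Zk k. box k c (int n) \<subseteq> R" for n
        proof -
          define T where "T = 1 + (\<Sum>p\<in>set hs. \<bar>snd p\<bar> + int n * (\<Sum>i<k. \<bar>fst p i\<bar>))"
          define c where "c = (\<lambda>i. T * d0 i)"
          have cZ: "c \<in> Zk k" by (simp add: Zk_def c_def d0_def)
          have "box k c (int n) \<subseteq> R"
          proof
            fix z assume zb: "z \<in> box k c (int n)"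
            have zZ: "z \<in> Zk k" using zb by (simp add: box_def)
            have "z \<in> halfspace k v nn" if vn: "(v, nn) \<in> set hs" for v nn
            proof (cases "\<exists>i<k. v i \<noteq> 0")
              case False
              hence "dotk k v z = 0" by (intro dotk_zero1) auto
              then show ?thesis using triv[OF vn] False zZ by (auto simp: halfspace_def)
            next
              case True
              hence "(v, nn) \<in> set hs'" using vn by (simp add: hs'_def)
              then obtain j where j: "j < length hs'" "hs'!j = (v, nn)" by (auto simp: in_set_conv_nth)
              have "vs!j = v" using j by (simp add: vs_def)
              hence dv: "dotk k v d \<ge> 1" using d j lvs by (metis int_one_le_iff_zero_less)
              have "dotk k v c = T * dotk k v d"
                unfolding c_def dd0[symmetric] dotk_comm[of k v] by (rule dotk_scale1)
              moreover have "T * dotk k v d \<ge> T"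
              proof -
                have "T \<ge> 0" unfolding T_def by (intro add_nonneg_nonneg sum_nonneg) auto
                thus ?thesis using mult_left_mono[OF dv] by simp
              qed
              moreover have "T \<ge> 1 + (\<bar>nn\<bar> + int n * (\<Sum>i<k. \<bar>v i\<bar>))"
              proof -
                have "\<bar>snd (v, nn)\<bar> + int n * (\<Sum>i<k. \<bar>fst (v, nn) i\<bar>)
                    \<le> (\<Sum>p\<in>set hs. \<bar>snd p\<bar> + int n * (\<Sum>i<k. \<bar>fst p i\<bar>))"
                  using vn by (intro member_le_sum) (auto intro: sum_nonneg)
                thus ?thesis unfolding T_def by simp
              qed
              moreover have "dotk k v z \<ge> dotk k v c - int n * (\<Sum>i<k. \<bar>v i\<bar>)"
                using box_dot_bound[OF zb] by simp
              ultimately have "dotk k v z > nn" by linarith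
              then show ?thesis using zZ by (simp add: halfspace_def)
            qed
            then show "z \<in> R" using hs(3) by auto
          qed
          then show ?thesis using cZ by blast
        qed
        then show ?thesis by blast
      next
        assume "gB k vs"
        then obtain l where l: "\<forall>j<length vs. l j \<ge> 0" "\<exists>j<length vs. l j > 0"
          "\<forall>i<k. (\<Sum>j<length vs. l j * (vs!j) i) = 0" unfolding gB_def by blast
        obtain j0 where j0: "j0 < length hs'" "l j0 > 0" using l(2) lvs by auto
        define L where "L = length hs'"
        define v0 where "v0 = vs!j0"
        define n0 where "n0 = snd (hs'!j0)"
        have hj0: "(v0, n0) \<in> set hs" using inhs(1)[OF j0(1)] j0(1)
          by (simp add: v0_def n0_def vs_def)
        have v0nz: "\<exists>i<k. v0 i \<noteq> 0" using inhs(2)[OF j0(1)] j0(1) by (simp add: v0_def vs_def)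
        have v0Z: "v0 \<in> Zk k" using hj0 hs(2) by auto
        define B where "B = (\<Sum>j\<in>{..<L} - {j0}. l j * (snd (hs'!j) + 1))"
        have bound: "n0 + 1 \<le> dotk k v0 z \<and> dotk k v0 z \<le> \<bar>B\<bar>" if zR: "z \<in> R" for z
        proof -
          have gt: "dotk k (vs!j) z \<ge> snd (hs'!j) + 1" if "j < L" for j
          proof -
            have "(fst (hs'!j), snd (hs'!j)) \<in> set hs" using inhs(1) that L_def by simp
            from memR[OF zR this] show ?thesis using that L_def by (simp add: vs_def)
          qed
          have "0 = dotk k (\<lambda>i. \<Sum>j<L. l j * (vs!j) i) z"
            using l(3) lvs L_def by (intro dotk_zero1[symmetric]) auto
          also have "\<dots> = (\<Sum>j<L. l j * dotk k (vs!j) z)" by (rule dotk_sum1)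
          also have "\<dots> = l j0 * dotk k v0 z + (\<Sum>j\<in>{..<L} - {j0}. l j * dotk k (vs!j) z)"
            using j0 L_def v0_def by (simp add: sum.remove)
          finally have eq: "l j0 * dotk k v0 z = - (\<Sum>j\<in>{..<L} - {j0}. l j * dotk k (vs!j) z)"
            by linarith
          have "B \<le> (\<Sum>j\<in>{..<L} - {j0}. l j * dotk k (vs!j) z)"
            unfolding B_def using l(1) lvs L_def gt by (intro sum_mono mult_left_mono) auto
          hence up: "l j0 * dotk k v0 z \<le> - B" using eq by linarith
          have lo: "n0 + 1 \<le> dotk k v0 z" using gt[of j0] j0 L_def by (simp add: v0_def n0_def)
          have "dotk k v0 z \<le> \<bar>B\<bar>"
          proof (cases "dotk k v0 z \<le> 0")
            case True then show ?thesis by simp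
          next
            case False
            hence "dotk k v0 z \<le> l j0 * dotk k v0 z" using j0(2)
              by (simp add: mult_le_cancel_right1)
            then show ?thesis using up by linarith
          qed
          with lo show ?thesis by simp
        qed
        have "measure_zero k R" unfolding measure_zero_def
        proof (intro conjI exI[of _ "map (\<lambda>m. (v0, m)) [n0+1..\<bar>B\<bar>]"])
          show "R \<subseteq> Zk k" by (rule Rsub)
          show "\<forall>(v, n)\<in>set (map (\<lambda>m. (v0, m)) [n0 + 1..\<bar>B\<bar>]). v \<in> Zk k \<and> v \<noteq> (\<lambda>_. 0)"
            using v0Z v0nz by auto
          show "R \<subseteq> (\<Union>(v, n)\<in>set (map (\<lambda>m. (v0, m)) [n0 + 1..\<bar>B\<bar>]). hyperplane k v n)"
          proof
            fix z assume zR: "z \<in> R"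
            have "z \<in> hyperplane k v0 (dotk k v0 z)" using Rsub zR by (auto simp: hyperplane_def)
            then show "z \<in> (\<Union>(v, n)\<in>set (map (\<lambda>m. (v0, m)) [n0 + 1..\<bar>B\<bar>]). hyperplane k v n)"
              using bound[OF zR] by auto
          qed
        qed
        then show ?thesis ..
      qed
    qed
  qed
qed

end
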